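(* Let $A$ be an alphabet of size $k$ with $k>1$, and suppose $L\subseteq A^*$ is $n$-PT. Then the canonical (minimal) DFA for $L$ has at most $m$ states, where $\log m = k\left(\frac{n+2k-3}{k-1}\right)^{k-1}\log n\,\log k$, with $\log$ denoting the logarithm to base $2$. Thus, for fixed $k$, the number of states of the canonical DFA of $L$ is in $2^{O(n^{k-1}\log n)}$ where $n=h(L)$.
   Context: For $n\in\mathbb{N}$, $u\sim_n v$ iff $u$ and $v$ have exactly the same (scattered) subwords of length at most $n$. A language $L\subseteq A^*$ is $n$-PT if it is a union of $\sim_n$-classes; $h(L)$ is the least $n$ such that $L$ is $n$-PT. *)

theory Defs
  imports Complex_Main "HOL-Library.Sublist"
begin

definition subwords_upto :: "nat \<Rightarrow> 'a list \<Rightarrow> 'a list set" where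
  "subwords_upto n u = {v. subseq v u \<and> length v \<le> n}"

definition simon_eq :: "nat \<Rightarrow> 'a list \<Rightarrow> 'a list \<Rightarrow> bool" where
  "simon_eq n u v \<longleftrightarrow> subwords_upto n u = subwords_upto n v"

definition n_PT :: "'a set \<Rightarrow> nat \<Rightarrow> 'a list set \<Rightarrow> bool" where
  "n_PT A n L \<longleftrightarrow> L \<subseteq> lists A \<and>
     (\<forall>u\<in>lists A. \<forall>v\<in>lists A. simon_eq n u v \<longrightarrow> (u \<in> L \<longleftrightarrow> v \<in> L))"

definition left_quot :: "'a set \<Rightarrow> 'a list \<Rightarrow> 'a list set \<Rightarrow> 'a list set" where
  "left_quot A u L = {w \<in> lists A. u @ w \<in> L}"

text \<open>States of the canonical (minimal, complete) DFA of L over A: the set of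
  left quotients u^{-1}L, u \<in> A*.\<close>
definition canonical_dfa_states :: "'a set \<Rightarrow> 'a list set \<Rightarrow> 'a list set set" where
  "canonical_dfa_states A L = {left_quot A u L | u. u \<in> lists A}"

end

theory Submission
  imports Defs
begin

lemma subseq_set': "subseq xs ys \<Longrightarrow> set xs \<subseteq> set ys"
  by (auto elim: list_emb_set)

definition univ :: "'a set \<Rightarrow> nat \<Rightarrow> 'a list \<Rightarrow> bool" where
  "univ A r y \<longleftrightarrow> (\<forall>w\<in>lists A. length w \<le> r \<longrightarrow> subseq w y)"

lemma split_left:
  assumes "univ A r y" "w \<in> lists A" "subseq w (y @ t)"
  shows "\<exists>w1 w2. w = w1 @ w2 \<and> subseq w1 y \<and> subseq w2 t \<and> (r \<le> length w1 \<or> w2 = [])"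
proof -
  obtain a b where ab: "w = a @ b" "subseq a y" "subseq b t"
    using assms(3) by (auto elim: subseq_appendE)
  show ?thesis
  proof (cases "r \<le> length a")
    case True then show ?thesis using ab by blast
  next
    case False
    show ?thesis
    proof (cases "length w \<le> r")
      case True
      then have "subseq w y" using assms(1,2) unfolding univ_def by blast
      then show ?thesis by (intro exI[of _ w] exI[of _ "[]"]) auto
    next
      case F2: False
      have "take r w \<in> lists A" using assms(2) by (auto dest: in_set_takeD)
      then have 1: "subseq (take r w) y" using assms(1) unfolding univ_def by simp
      have "drop r w = drop (r - length a) b" using False ab(1) by simp
      then have "subseq (drop r w) b" by (metis suffix_drop suffix_imp_subseq)
      then have 2: "subseq (drop r w) t" using ab(3) by (metis subseq_order.order_trans)
      show ?thesis using 1 2 F2 by (intro exI[of _ "take r w"] exI[of _ "drop r w"]) auto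
    qed
  qed
qed

lemma split_right:
  assumes "univ A s z" "w \<in> lists A" "subseq w (t @ z)"
  shows "\<exists>w1 w2. w = w1 @ w2 \<and> subseq w1 t \<and> subseq w2 z \<and> (s \<le> length w2 \<or> w1 = [])"
proof -
  obtain a b where ab: "w = a @ b" "subseq a t" "subseq b z"
    using assms(3) by (auto elim: subseq_appendE)
  show ?thesis
  proof (cases "s \<le> length b")
    case True then show ?thesis using ab by blast
  next
    case False
    show ?thesis
    proof (cases "length w \<le> s")
      case True
      then have "subseq w z" using assms(1,2) unfolding univ_def by blast
      then show ?thesis by (intro exI[of _ "[]"] exI[of _ w]) auto
    next
      case F2: False
      have "drop (length w - s) w \<in> lists A" using assms(2) by (auto dest: in_set_dropD)
      then have 1: "subseq (drop (length w - s) w) z" using assms(1) unfolding univ_def by simp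
      have "take (length w - s) w = take (length w - s) a" using False ab(1) by simp
      then have "subseq (take (length w - s) w) a" by (metis prefix_imp_subseq take_is_prefix)
      then have 2: "subseq (take (length w - s) w) t" using ab(2) by (metis subseq_order.order_trans)
      show ?thesis using 1 2 F2 by (intro exI[of _ "take (length w - s) w"] exI[of _ "drop (length w - s) w"]) auto
    qed
  qed
qed

lemma sandwich_sub:
  assumes "univ A r y" "univ A s z" "simon_eq q v v'" "p \<le> q + r + s" "y @ v @ z \<in> lists A"
  shows "subwords_upto p (y @ v @ z) \<subseteq> subwords_upto p (y @ v' @ z)"
proof
  fix w assume "w \<in> subwords_upto p (y @ v @ z)"
  then have w: "subseq w (y @ v @ z)" "length w \<le> p" by (auto simp: subwords_upto_def)
  have wA: "w \<in> lists A" using subseq_set'[OF w(1)] assms(5) by auto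
  obtain w1 w2 where w12: "w = w1 @ w2" "subseq w1 y" "subseq w2 (v @ z)" "r \<le> length w1 \<or> w2 = []"
    using split_left[OF assms(1) wA w(1)] by blast
  have "subseq w (y @ v' @ z)"
  proof (cases "w2 = []")
    case True then show ?thesis using w12 by (simp add: subseq_rev_drop_many)
  next
    case False
    then have r: "r \<le> length w1" using w12 by simp
    have w2A: "w2 \<in> lists A" using wA w12(1) by simp
    obtain a b where ab: "w2 = a @ b" "subseq a v" "subseq b z" "s \<le> length b \<or> a = []"
      using split_right[OF assms(2) w2A w12(3)] by blast
    show ?thesis
    proof (cases "a = []")
      case True
      then have "subseq w2 (v' @ z)" using ab by (simp add: subseq_drop_many)
      then show ?thesis using w12 by (simp add: list_emb_append_mono)
    next
      case False
      then have "s \<le> length b" using ab by simp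
      then have "length a \<le> q" using w(2) w12(1) ab(1) r assms(4) by simp
      then have "a \<in> subwords_upto q v" using ab(2) by (simp add: subwords_upto_def)
      then have "a \<in> subwords_upto q v'" using assms(3) by (simp add: simon_eq_def)
      then have "subseq a v'" by (simp add: subwords_upto_def)
      then have "subseq (a @ b) (v' @ z)" using ab(3) by (simp add: list_emb_append_mono)
      then show ?thesis using w12 ab by (simp add: list_emb_append_mono)
    qed
  qed
  then show "w \<in> subwords_upto p (y @ v' @ z)" using w(2) by (simp add: subwords_upto_def)
qed

lemma sandwich:
  assumes "univ A r y" "univ A s z" "simon_eq q v v'" "p \<le> q + r + s"
    "y @ v @ z \<in> lists A" "y @ v' @ z \<in> lists A"
  shows "simon_eq p (y @ v @ z) (y @ v' @ z)"
proof -
  have "simon_eq q v' v" using assms(3) by (simp add: simon_eq_def)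
  then have "subwords_upto p (y @ v' @ z) \<subseteq> subwords_upto p (y @ v @ z)"
    using sandwich_sub[OF assms(1,2) _ assms(4,6)] by blast
  then show ?thesis using sandwich_sub[OF assms(1-5)] unfolding simon_eq_def by blast
qed

lemma univ0: "univ A 0 y" by (simp add: univ_def)

lemma univ_app: "univ A m v \<Longrightarrow> univ A m (t @ v)"
  by (simp add: univ_def subseq_drop_many)

lemma univ_drop:
  assumes "a \<notin> set x" "univ A (Suc m) (x @ a # v)" "a \<in> A"
  shows "univ A m v"
  unfolding univ_def
proof (intro ballI impI)
  fix w assume w: "w \<in> lists A" "length w \<le> m"
  then have "subseq (a # w) (x @ a # v)" using assms(2,3) unfolding univ_def by simp
  then obtain w1 w2 where h: "a # w = w1 @ w2" "subseq w1 x" "subseq w2 (a # v)"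
    by (auto elim: subseq_appendE)
  have "w1 = []"
  proof (rule ccontr)
    assume "w1 \<noteq> []"
    then have "a \<in> set w1" using h(1) by (cases w1) auto
    then show False using subseq_set'[OF h(2)] assms(1) by auto
  qed
  then have "subseq (a # w) (a # v)" using h by simp
  then show "subseq w v" by (rule subseq_Cons2')
qed

lemma univ_add:
  assumes "A \<subseteq> insert a (set x)" "univ A m v"
  shows "univ A (Suc m) (x @ a # v)"
  unfolding univ_def
proof (intro ballI impI)
  fix w assume w: "w \<in> lists A" "length w \<le> Suc m"
  show "subseq w (x @ a # v)"
  proof (cases w)
    case Nil then show ?thesis by simp
  next
    case (Cons c w')
    then have "c \<in> set (x @ [a])" using w assms(1) by auto
    then have 1: "subseq [c] (x @ [a])" by (simp add: subseq_singleton_left)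
    have "subseq w' v" using assms(2) w Cons unfolding univ_def by simp
    then have "subseq ([c] @ w') ((x @ [a]) @ v)" using 1 by (intro list_emb_append_mono)
    then show ?thesis using Cons by simp
  qed
qed

lemma univ_non:
  assumes "\<not> univ A (Suc 0) u" "u \<in> lists A"
  shows "\<exists>b\<in>A. u \<in> lists (A - {b})"
proof -
  obtain w where w: "w \<in> lists A" "length w \<le> 1" "\<not> subseq w u" using assms(1) unfolding univ_def by auto
  then obtain b where "w = [b]" by (cases w) auto
  then show ?thesis using w assms(2) by (auto simp: subseq_singleton_left)
qed

lemma univ_set: "univ A (Suc m) u \<Longrightarrow> A \<subseteq> set u"
proof
  fix c assume "univ A (Suc m) u" "c \<in> A"
  then have "subseq [c] u" unfolding univ_def by simp
  then show "c \<in> set u" by (simp add: subseq_singleton_left)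
qed

lemma rich_split:
  assumes "A \<noteq> {}" "A \<subseteq> set u"
  shows "\<exists>x a v. u = x @ a # v \<and> a \<notin> set x \<and> A \<subseteq> insert a (set x)"
  using assms(2)
proof (induction u rule: rev_induct)
  case Nil then show ?case using assms(1) by auto
next
  case (snoc c u)
  show ?case
  proof (cases "A \<subseteq> set u")
    case True
    then obtain x a v where "u = x @ a # v" "a \<notin> set x" "A \<subseteq> insert a (set x)" using snoc by blast
    then show ?thesis by (intro exI[of _ x] exI[of _ a] exI[of _ "v @ [c]"]) auto
  next
    case False
    then have "c \<notin> set u" using snoc.prems by auto
    then show ?thesis using snoc.prems by (intro exI[of _ u] exI[of _ c] exI[of _ "[]"]) auto
  qed
qed

lemma simon_set:
  assumes "simon_eq q x x'" "q \<ge> 1" shows "set x = set x'"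
proof -
  have "c \<in> set x \<longleftrightarrow> c \<in> set x'" for c
  proof -
    have "c \<in> set x \<longleftrightarrow> [c] \<in> subwords_upto q x"
      using assms(2) by (simp add: subwords_upto_def subseq_singleton_left)
    also have "\<dots> \<longleftrightarrow> [c] \<in> subwords_upto q x'" using assms(1) by (simp add: simon_eq_def)
    also have "\<dots> \<longleftrightarrow> c \<in> set x'"
      using assms(2) by (simp add: subwords_upto_def subseq_singleton_left)
    finally show ?thesis .
  qed
  then show ?thesis by blast
qed

lemma simon_refl: "simon_eq p u u" by (simp add: simon_eq_def)
lemma simon_sym: "simon_eq p u v \<Longrightarrow> simon_eq p v u" by (simp add: simon_eq_def)
lemma simon_trans: "simon_eq p u v \<Longrightarrow> simon_eq p v w \<Longrightarrow> simon_eq p u w" by (simp add: simon_eq_def)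
lemma simon_0: "simon_eq 0 u v" by (auto simp: simon_eq_def subwords_upto_def)

lemma simon_right:
  assumes "simon_eq n u v" "u @ w \<in> lists A" "v @ w \<in> lists A"
  shows "simon_eq n (u @ w) (v @ w)"
  using sandwich[OF univ0[of A "[]"] univ0[of A w] assms(1) _, of n] assms(2,3) by simp


fun g :: "nat \<Rightarrow> nat \<Rightarrow> nat" where
  "g 0 p = 1"
| "g (Suc k) p = (\<Sum>m\<le>p. (Suc k * g k (p - m + 1)) ^ m * (if m = p then 1 else Suc k * g k (p - m)))"

definition d :: "nat \<Rightarrow> nat \<Rightarrow> nat \<Rightarrow> nat" where
  "d k p m = (Suc k * g k (p - m + 1)) ^ m * (if m = p then 1 else Suc k * g k (p - m))"

lemma d_Suc: "m \<le> p \<Longrightarrow> d k (Suc p) (Suc m) = Suc k * g k (p - m + 1) * d k p m"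
  by (simp add: d_def)

lemma inner:
  fixes A :: "'a set"
  assumes fin: "finite A" and cA: "card A = Suc k"
    and IHk: "\<And>(B :: 'a set) q. finite B \<Longrightarrow> card B = k \<Longrightarrow> \<exists>R. R \<subseteq> lists B \<and> finite R \<and> card R \<le> g k q \<and> (\<forall>u\<in>lists B. \<exists>r\<in>R. simon_eq q u r)"
  shows "m \<le> p \<Longrightarrow> \<exists>R. R \<subseteq> lists A \<and> finite R \<and> card R \<le> d k p m \<and>
     (\<forall>u\<in>lists A. univ A m u \<and> (m = p \<or> \<not> univ A (Suc m) u) \<longrightarrow> (\<exists>r\<in>R. simon_eq p u r))"
proof (induction m arbitrary: p)
  case 0
  show ?case
  proof (cases "p = 0")
    case True
    then show ?thesis by (intro exI[of _ "{[]}"]) (simp add: d_def simon_0)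
  next
    case False
    have "\<forall>b\<in>A. \<exists>Y. Y \<subseteq> lists (A - {b}) \<and> finite Y \<and> card Y \<le> g k p \<and> (\<forall>u\<in>lists (A - {b}). \<exists>r\<in>Y. simon_eq p u r)"
    proof
      fix b assume "b \<in> A"
      then have "card (A - {b}) = k" using cA fin by (simp add: card_Diff_singleton)
      then show "\<exists>Y. Y \<subseteq> lists (A - {b}) \<and> finite Y \<and> card Y \<le> g k p \<and> (\<forall>u\<in>lists (A - {b}). \<exists>r\<in>Y. simon_eq p u r)"
        using IHk[of "A - {b}" p] fin by blast
    qed
    from bchoice[OF this] obtain Y where Y: "\<forall>b\<in>A. Y b \<subseteq> lists (A - {b}) \<and> finite (Y b) \<and> card (Y b) \<le> g k p \<and> (\<forall>u\<in>lists (A - {b}). \<exists>r\<in>Y b. simon_eq p u r)"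
      by blast
    have Y1: "Y b \<subseteq> lists A" if "b \<in> A" for b
    proof -
      have "Y b \<subseteq> lists (A - {b})" using Y that by blast
      moreover have "lists (A - {b}) \<subseteq> lists A" by (rule lists_mono) blast
      ultimately show ?thesis by (rule order_trans)
    qed
    have Y2: "finite (Y b)" "card (Y b) \<le> g k p" if "b \<in> A" for b using Y that by blast+
    have Y3: "\<exists>r\<in>Y b. simon_eq p u r" if "b \<in> A" "u \<in> lists (A - {b})" for b u
      using Y that by blast
    let ?R = "\<Union>b\<in>A. Y b"
    have "card ?R \<le> (\<Sum>b\<in>A. card (Y b))" by (rule card_UN_le[OF fin])
    also have "\<dots> \<le> (\<Sum>b\<in>A. g k p)" by (rule sum_mono) (rule Y2(2))
    also have "\<dots> = d k p 0" using cA False by (simp add: d_def)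
    finally have c: "card ?R \<le> d k p 0" .
    have s: "?R \<subseteq> lists A" using Y1 by (rule UN_least)
    have f: "finite ?R" using Y2(1) fin by (intro finite_UN_I)
    have cov: "\<forall>u\<in>lists A. univ A 0 u \<and> (0 = p \<or> \<not> univ A (Suc 0) u) \<longrightarrow> (\<exists>r\<in>?R. simon_eq p u r)"
    proof (intro ballI impI)
      fix u assume uu: "u \<in> lists A" "univ A 0 u \<and> (0 = p \<or> \<not> univ A (Suc 0) u)"
      then have "\<not> univ A (Suc 0) u" using False by simp
      then obtain b where b: "b \<in> A" "u \<in> lists (A - {b})" using univ_non[OF _ uu(1)] by blast
      then obtain r where "r \<in> Y b" "simon_eq p u r" using Y3 by blast
      then show "\<exists>r\<in>?R. simon_eq p u r" using b(1) by blast
    qed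
    show ?thesis using c s f cov by (intro exI[of _ ?R]) simp
  qed
next
  case (Suc m)
  then obtain p' where p: "p = Suc p'" and mp: "m \<le> p'" by (cases p) auto
  from Suc.IH[OF mp] obtain V where V: "V \<subseteq> lists A" "finite V" "card V \<le> d k p' m"
    "\<forall>u\<in>lists A. univ A m u \<and> (m = p' \<or> \<not> univ A (Suc m) u) \<longrightarrow> (\<exists>r\<in>V. simon_eq p' u r)"
    by blast
  have "\<forall>a\<in>A. \<exists>X. X \<subseteq> lists (A - {a}) \<and> finite X \<and> card X \<le> g k (p' - m + 1) \<and> (\<forall>u\<in>lists (A - {a}). \<exists>r\<in>X. simon_eq (p' - m + 1) u r)"
  proof
    fix b assume "b \<in> A"
    then have "card (A - {b}) = k" using cA fin by (simp add: card_Diff_singleton)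
    then show "\<exists>X. X \<subseteq> lists (A - {b}) \<and> finite X \<and> card X \<le> g k (p' - m + 1) \<and> (\<forall>u\<in>lists (A - {b}). \<exists>r\<in>X. simon_eq (p' - m + 1) u r)"
      using IHk[of "A - {b}" "p' - m + 1"] fin by blast
  qed
  from bchoice[OF this] obtain X where X: "\<forall>a\<in>A. X a \<subseteq> lists (A - {a}) \<and> finite (X a) \<and> card (X a) \<le> g k (p' - m + 1) \<and> (\<forall>u\<in>lists (A - {a}). \<exists>r\<in>X a. simon_eq (p' - m + 1) u r)"
    by blast
  have X1: "X a \<subseteq> lists A" if "a \<in> A" for a
  proof -
    have "X a \<subseteq> lists (A - {a})" using X that by blast
    moreover have "lists (A - {a}) \<subseteq> lists A" by (rule lists_mono) blast
    ultimately show ?thesis by (rule order_trans)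
  qed
  have X2: "finite (X a)" "card (X a) \<le> g k (p' - m + 1)" if "a \<in> A" for a using X that by blast+
  let ?S = "SIGMA a:A. X a \<times> V"
  let ?R = "(\<lambda>(a,x,v). x @ a # v) ` ?S"
  have fS: "finite ?S" using X2(1) V(2) fin by (intro finite_SigmaI finite_cartesian_product)
  have "card ?R \<le> card ?S" by (rule card_image_le[OF fS])
  also have "\<dots> = (\<Sum>a\<in>A. card (X a \<times> V))"
    using X2(1) V(2) fin by (intro card_SigmaI ballI finite_cartesian_product)
  also have "\<dots> = (\<Sum>a\<in>A. card (X a) * card V)" by (simp add: card_cartesian_product)
  also have "\<dots> \<le> (\<Sum>a\<in>A. g k (p' - m + 1) * d k p' m)"
    by (intro sum_mono mult_mono X2(2) V(3)) simp_all
  also have "\<dots> = Suc k * g k (p' - m + 1) * d k p' m" using cA by (simp add: algebra_simps)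
  also have "\<dots> = d k p (Suc m)" using p mp by (simp add: d_Suc)
  finally have c: "card ?R \<le> d k p (Suc m)" .
  have s: "?R \<subseteq> lists A"
  proof
    fix w assume "w \<in> ?R"
    then obtain a x v where w: "w = x @ a # v" "a \<in> A" "x \<in> X a" "v \<in> V" by auto
    then have "x \<in> lists A" using X1 by blast
    moreover have "v \<in> lists A" using V(1) w(4) by blast
    ultimately show "w \<in> lists A" using w(1,2) by simp
  qed
  have f: "finite ?R" using fS by (rule finite_imageI)
  have cov: "\<exists>r\<in>?R. simon_eq p u r"
    if u: "u \<in> lists A" "univ A (Suc m) u" "Suc m = p \<or> \<not> univ A (Suc (Suc m)) u" for u
  proof -
    have "A \<noteq> {}" using cA by auto
    then obtain x a v where xav: "u = x @ a # v" "a \<notin> set x" "A \<subseteq> insert a (set x)"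
      using rich_split[OF _ univ_set[OF u(2)]] by blast
    have aA: "a \<in> A" and vA: "v \<in> lists A" and xA: "x \<in> lists (A - {a})" using u(1) xav by auto
    have uv: "univ A m v" using u(2) xav(1) univ_drop[OF xav(2) _ aA] by simp
    have ex: "m = p' \<or> \<not> univ A (Suc m) v"
      using u(3) p univ_add[OF xav(3)] xav(1) by auto
    obtain v' where v': "v' \<in> V" "simon_eq p' v v'" using V(4) vA uv ex by blast
    have Xa: "X a \<subseteq> lists (A - {a})" "\<forall>u\<in>lists (A - {a}). \<exists>r\<in>X a. simon_eq (p' - m + 1) u r"
      using X aA by auto
    obtain x' where x': "x' \<in> X a" "simon_eq (p' - m + 1) x x'" using Xa(2) xA by blast
    have x'A: "x' \<in> lists (A - {a})" using Xa(1) x' by blast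
    have v'A: "v' \<in> lists A" using V v' by blast
    have "univ A m ([a] @ v)" by (rule univ_app[OF uv])
    then have s1: "simon_eq p ([] @ x @ (a # v)) ([] @ x' @ (a # v))"
      using p mp x'A xA aA vA by (intro sandwich[OF univ0 _ x'(2)]) auto
    have "set x' = set x" using simon_set[OF x'(2)] by simp
    then have "univ A (Suc 0) (x' @ a # [])" using xav(3) univ0 by (intro univ_add) auto
    then have s2: "simon_eq p ((x' @ [a]) @ v @ []) ((x' @ [a]) @ v' @ [])"
      using p x'A vA v'A aA by (intro sandwich[OF _ univ0 v'(2)]) auto
    have "simon_eq p u (x' @ a # v')" using s1 s2 xav(1) by (auto intro: simon_trans)
    moreover have "(a, x', v') \<in> ?S" using x' v' aA by simp
    then have "x' @ a # v' \<in> ?R" by (rule rev_image_eqI) simp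
    ultimately show ?thesis by blast
  qed
  have cov': "\<forall>u\<in>lists A. univ A (Suc m) u \<and> (Suc m = p \<or> \<not> univ A (Suc (Suc m)) u) \<longrightarrow> (\<exists>r\<in>?R. simon_eq p u r)"
    using cov by blast
  show ?case using c s f cov' by (intro exI[of _ ?R]) simp
qed

lemma exists_level: "\<exists>m\<le>p. univ A m u \<and> (m = p \<or> \<not> univ A (Suc m) u)"
proof (induction p)
  case 0 then show ?case using univ0 by blast
next
  case (Suc p)
  then obtain m where m: "m \<le> p" "univ A m u" "m = p \<or> \<not> univ A (Suc m) u" by blast
  show ?case
  proof (cases "m = p \<and> univ A (Suc p) u")
    case True then show ?thesis by blast
  next
    case False
    then have "\<not> univ A (Suc m) u" using m(3) by blast
    then show ?thesis using m(1,2) by (intro exI[of _ m]) simp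
  qed
qed

lemma reps:
  fixes A :: "'a set"
  shows "finite A \<Longrightarrow> card A = k \<Longrightarrow> \<exists>R. R \<subseteq> lists A \<and> finite R \<and> card R \<le> g k p \<and> (\<forall>u\<in>lists A. \<exists>r\<in>R. simon_eq p u r)"
proof (induction k arbitrary: A p)
  case 0
  then have "A = {}" by simp
  then have "lists A = {[]}" by auto
  then show ?case by (intro exI[of _ "{[]}"]) (simp add: simon_refl)
next
  case (Suc k)
  have IHk: "\<exists>R. R \<subseteq> lists B \<and> finite R \<and> card R \<le> g k q \<and> (\<forall>u\<in>lists B. \<exists>r\<in>R. simon_eq q u r)"
    if "finite B" "card B = k" for B :: "'a set" and q
    using Suc.IH[OF that] .
  have "\<forall>m\<in>{..p}. \<exists>R. R \<subseteq> lists A \<and> finite R \<and> card R \<le> d k p m \<and>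
     (\<forall>u\<in>lists A. univ A m u \<and> (m = p \<or> \<not> univ A (Suc m) u) \<longrightarrow> (\<exists>r\<in>R. simon_eq p u r))"
  proof
    fix m assume "m \<in> {..p}"
    then have mp: "m \<le> p" by simp
    show "\<exists>R. R \<subseteq> lists A \<and> finite R \<and> card R \<le> d k p m \<and>
     (\<forall>u\<in>lists A. univ A m u \<and> (m = p \<or> \<not> univ A (Suc m) u) \<longrightarrow> (\<exists>r\<in>R. simon_eq p u r))"
      apply (rule inner[OF Suc.prems(1) Suc.prems(2)])
       apply (rule IHk; assumption)
      apply (rule mp)
      done
  qed
  from bchoice[OF this] obtain R where R: "\<forall>m\<in>{..p}. R m \<subseteq> lists A \<and> finite (R m) \<and> card (R m) \<le> d k p m \<and>
     (\<forall>u\<in>lists A. univ A m u \<and> (m = p \<or> \<not> univ A (Suc m) u) \<longrightarrow> (\<exists>r\<in>R m. simon_eq p u r))"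
    by blast
  have R1: "R m \<subseteq> lists A" "finite (R m)" "card (R m) \<le> d k p m" if "m \<le> p" for m
    using R that by auto
  have R2: "\<exists>r\<in>R m. simon_eq p u r" if "m \<le> p" "u \<in> lists A" "univ A m u" "m = p \<or> \<not> univ A (Suc m) u" for m u
  proof -
    have "m \<in> {..p}" using that(1) by simp
    then have "\<forall>u\<in>lists A. univ A m u \<and> (m = p \<or> \<not> univ A (Suc m) u) \<longrightarrow> (\<exists>r\<in>R m. simon_eq p u r)"
      using R by blast
    then show ?thesis using that(2-4) by blast
  qed
  let ?R = "\<Union>m\<in>{..p}. R m"
  have "card ?R \<le> (\<Sum>m\<le>p. card (R m))" by (rule card_UN_le) simp
  also have "\<dots> \<le> (\<Sum>m\<le>p. d k p m)" by (rule sum_mono) (simp add: R1(3))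
  also have "\<dots> = g (Suc k) p" by (simp add: d_def)
  finally have c: "card ?R \<le> g (Suc k) p" .
  have s: "?R \<subseteq> lists A" using R1(1) by (intro UN_least) simp
  have f: "finite ?R" using R1(2) by (intro finite_UN_I) simp_all
  have cov: "\<forall>u\<in>lists A. \<exists>r\<in>?R. simon_eq p u r"
  proof
    fix u assume u: "u \<in> lists A"
    obtain m where m: "m \<le> p" "univ A m u" "m = p \<or> \<not> univ A (Suc m) u" using exists_level by blast
    obtain r where "r \<in> R m" "simon_eq p u r" using R2[OF m(1) u m(2,3)] by blast
    then show "\<exists>r\<in>?R. simon_eq p u r" using m(1) by blast
  qed
  show ?case using c s f cov by (intro exI[of _ ?R]) simp
qed

lemma states_bound:
  assumes "finite A" "card A = k" "n_PT A n L"
  shows "finite (canonical_dfa_states A L) \<and> card (canonical_dfa_states A L) \<le> g k n"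
proof -
  obtain R where R: "R \<subseteq> lists A" "finite R" "card R \<le> g k n" "\<forall>u\<in>lists A. \<exists>r\<in>R. simon_eq n u r"
    using reps[OF assms(1,2), of n] by blast
  have sub: "canonical_dfa_states A L \<subseteq> (\<lambda>r. left_quot A r L) ` R"
  proof
    fix Q assume "Q \<in> canonical_dfa_states A L"
    then obtain u where u: "Q = left_quot A u L" "u \<in> lists A" unfolding canonical_dfa_states_def by blast
    obtain r where r: "r \<in> R" "simon_eq n u r" using R(4) u(2) by blast
    have rA: "r \<in> lists A" using R(1) r(1) by blast
    have "left_quot A u L = left_quot A r L"
    proof -
      have "u @ w \<in> L \<longleftrightarrow> r @ w \<in> L" if "w \<in> lists A" for w
      proof -
        have "simon_eq n (u @ w) (r @ w)" using that u(2) rA by (intro simon_right[OF r(2)]) simp_all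
        moreover have "\<forall>u\<in>lists A. \<forall>v\<in>lists A. simon_eq n u v \<longrightarrow> (u \<in> L \<longleftrightarrow> v \<in> L)"
          using assms(3) unfolding n_PT_def by blast
        moreover have "u @ w \<in> lists A" "r @ w \<in> lists A" using that u(2) rA by simp_all
        ultimately show ?thesis by blast
      qed
        then show ?thesis unfolding left_quot_def by blast
    qed
    then show "Q \<in> (\<lambda>r. left_quot A r L) ` R" using u r by blast
  qed
  have "finite (canonical_dfa_states A L)" by (rule finite_subset[OF sub finite_imageI[OF R(2)]])
  moreover have "card (canonical_dfa_states A L) \<le> card R"
  proof -
    have "card (canonical_dfa_states A L) \<le> card ((\<lambda>r. left_quot A r L) ` R)"
      by (rule card_mono[OF finite_imageI[OF R(2)] sub])
    also have "\<dots> \<le> card R" by (rule card_image_le[OF R(2)])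
    finally show ?thesis .
  qed
  ultimately show ?thesis using R(3) by simp
qed


lemma amgm:
  fixes a y :: real and i :: nat
  assumes a: "a \<ge> 0" and y: "y \<ge> 0"
  shows "a * y ^ i \<le> ((a + real i * y) / (real i + 1)) ^ (i + 1)"
proof (cases "y = 0")
  case True
  then show ?thesis using a by (cases i) auto
next
  case False
  then have yp: "y > 0" using y by simp
  define M where "M = (a + real i * y) / (real i + 1)"
  have M0: "M \<ge> 0" using a y unfolding M_def by simp
  define t where "t = (M - y) / y"
  have t1: "-1 \<le> t" using M0 yp unfolding t_def by (simp add: field_simps)
  have ty: "(1 + t) * y = M" using yp unfolding t_def by (simp add: field_simps)
  have B: "1 + real (i+1) * t \<le> (1 + t) ^ (i+1)" by (rule Bernoulli_inequality[OF t1])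
  have Mi: "M * (real i + 1) = a + real i * y" unfolding M_def by (simp add: field_simps)
  have "y ^ (i+1) * (1 + real (i+1) * t) = y ^ i * (y + (real i + 1) * (M - y))"
    using yp unfolding t_def by (simp add: field_simps)
  also have "\<dots> = y ^ i * a" using Mi by (simp add: algebra_simps)
  finally have eq0: "y ^ (i+1) * (1 + real (i+1) * t) = y ^ i * a" .
  have eq: "a * y ^ i = y ^ (i+1) * (1 + real (i+1) * t)" using eq0 by (metis mult.commute)
  have "a * y ^ i \<le> y ^ (i+1) * (1 + t) ^ (i+1)" unfolding eq using B yp by (intro mult_left_mono) auto
  also have "\<dots> = ((1 + t) * y) ^ (i+1)" by (simp add: power_mult_distrib mult.commute)
  also have "\<dots> = M ^ (i+1)" using ty by simp
  finally show ?thesis unfolding M_def .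
qed

lemma bern2:
  fixes x :: real assumes x: "x \<ge> 0"
  shows "1 + real n * x + real n * (real n - 1) / 2 * x ^ 2 \<le> (1 + x) ^ n"
proof (induction n)
  case 0 then show ?case by simp
next
  case (Suc n)
  have nn: "real n * (real n - 1) \<ge> 0" by (cases n) auto
  have d: "(1 + real n * x + real n * (real n - 1) / 2 * x ^ 2) * (1 + x)
      - (1 + real (Suc n) * x + real (Suc n) * (real (Suc n) - 1) / 2 * x ^ 2)
      = real n * (real n - 1) / 2 * x ^ 3"
    by (simp add: field_simps power2_eq_square power3_eq_cube)
  have "real n * (real n - 1) / 2 * x ^ 3 \<ge> 0" using nn x by simp
  then have "1 + real (Suc n) * x + real (Suc n) * (real (Suc n) - 1) / 2 * x ^ 2
        \<le> (1 + real n * x + real n * (real n - 1) / 2 * x ^ 2) * (1 + x)" using d by linarith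
  also have "\<dots> \<le> (1 + x) ^ n * (1 + x)" using Suc.IH x by (intro mult_right_mono) auto
  finally show ?case by (simp add: mult.commute)
qed

definition PP :: "nat \<Rightarrow> nat \<Rightarrow> real" where
  "PP k p = ((real p + 2 * real k - 3) / (real k - 1)) ^ (k - 1)"

definition EL :: "real \<Rightarrow> nat \<Rightarrow> nat \<Rightarrow> real" where
  "EL L k p = real k * PP k p * L * log 2 (real k)"

lemma PP_nonneg: "k \<ge> 2 \<Longrightarrow> PP k p \<ge> 0"
  unfolding PP_def by (intro zero_le_power divide_nonneg_nonneg) auto

lemma EL_nonneg: "k \<ge> 2 \<Longrightarrow> L \<ge> 0 \<Longrightarrow> EL L k p \<ge> 0"
  unfolding EL_def using PP_nonneg[of k p] by (intro mult_nonneg_nonneg) auto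

lemma zlem: "(z::real) > 0 \<Longrightarrow> z * (z - 1) / 2 * (A / z ^ 2) = (z - 1) / z * A / 2"
  by (simp add: power2_eq_square field_simps)

lemma lin1: "(X::real) = Q / 2 \<Longrightarrow> 1 / 2 * R \<le> Q \<Longrightarrow> R / 4 \<le> X"
  by linarith

lemma P2_ge:
  fixes j p :: nat assumes j: "j \<ge> 1"
  shows "2 * (real p + 1) \<le> PP (Suc (Suc j)) p"
proof -
  define x where "x = (real p + real j) / (real j + 1)"
  have x0: "x \<ge> 0" unfolding x_def by simp
  have PPx: "PP (Suc (Suc j)) p = (1 + x) ^ (Suc j)"
  proof -
    have "(real p + 2 * real (Suc (Suc j)) - 3) / (real (Suc (Suc j)) - 1) = 1 + x"
      unfolding x_def by (simp add: field_simps)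
    then show ?thesis unfolding PP_def by simp
  qed
  have B: "1 + real (Suc j) * x + real (Suc j) * (real (Suc j) - 1) / 2 * x ^ 2 \<le> (1 + x) ^ (Suc j)"
    by (rule bern2[OF x0])
  have e1: "real (Suc j) * x = real p + real j" unfolding x_def by (simp add: field_simps)
  have jp1: "real j + 1 \<noteq> 0" by simp
  have e2: "real (Suc j) * (real (Suc j) - 1) / 2 * x ^ 2 = real j / (real j + 1) * (real p + real j) ^ 2 / 2"
  proof -
    have "x ^ 2 = (real p + real j) ^ 2 / (real j + 1) ^ 2" unfolding x_def by (simp add: power_divide)
    then have "real (Suc j) * (real (Suc j) - 1) / 2 * x ^ 2
        = (real j + 1) * real j / 2 * ((real p + real j) ^ 2 / (real j + 1) ^ 2)" by simp
    also have "\<dots> = real j / (real j + 1) * (real p + real j) ^ 2 / 2"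
      using zlem[of "real j + 1" "(real p + real j) ^ 2"] by simp
    finally show ?thesis .
  qed
  have h1: "real j / (real j + 1) \<ge> 1 / 2" using j by (simp add: field_simps)
  have h2: "(real p + real j) ^ 2 \<ge> (real p + 1) ^ 2" using j by (intro power_mono) auto
  have "real j / (real j + 1) * (real p + real j) ^ 2 \<ge> 1 / 2 * (real p + 1) ^ 2"
    using h1 h2 by (intro mult_mono) auto
  then have h3: "real (Suc j) * (real (Suc j) - 1) / 2 * x ^ 2 \<ge> (real p + 1) ^ 2 / 4"
    using e2 lin1 by blast
  have h4: "(real p + 1) ^ 2 / 4 \<ge> real p"
  proof -
    have "(real p - 1) ^ 2 \<ge> 0" by simp
    then show ?thesis by (simp add: power2_eq_square field_simps)
  qed
  have "2 * (real p + 1) \<le> 1 + real (Suc j) * x + real (Suc j) * (real (Suc j) - 1) / 2 * x ^ 2"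
    using e1 h3 h4 j by simp
  then show ?thesis using B PPx by simp
qed

lemma core:
  fixes j m p :: nat and L :: real
  assumes j: "j \<ge> 1" and mp: "m \<le> p" and L: "L \<ge> 1"
  shows "log 2 (real p + 1) + (real m * (log 2 (real (Suc (Suc j))) + EL L (Suc j) (p - m + 1))
           + (log 2 (real (Suc (Suc j))) + EL L (Suc j) (p - m))) \<le> EL L (Suc (Suc j)) p"
proof -
  define y where "y = (real (p - m) + 2 * real j) / real j"
  have y0: "y \<ge> 0" unfolding y_def by simp
  have jp: "real j > 0" using j by simp
  have h1: "PP (Suc j) (p - m + 1) = y ^ j"
  proof -
    have "(real (p - m + 1) + 2 * real (Suc j) - 3) / (real (Suc j) - 1) = y"
      unfolding y_def by (simp add: field_simps)
    then show ?thesis unfolding PP_def by simp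
  qed
  have h2: "PP (Suc j) (p - m) \<le> y ^ j"
  proof -
    have b: "(real (p - m) + 2 * real (Suc j) - 3) / (real (Suc j) - 1) = (real (p - m) + 2 * real j - 1) / real j"
      by (simp add: field_simps)
    have "(real (p - m) + 2 * real j - 1) / real j \<le> y" unfolding y_def using jp by (simp add: divide_right_mono)
    moreover have "(real (p - m) + 2 * real j - 1) / real j \<ge> 0" using j by simp
    ultimately show ?thesis unfolding PP_def b by (simp add: power_mono)
  qed
  define P2 where "P2 = PP (Suc (Suc j)) p"
  have h3: "P2 = ((real (m + 1) + real j * y) / (real j + 1)) ^ (j + 1)"
  proof -
    have "real j * y = real (p - m) + 2 * real j" unfolding y_def using jp by simp
    then have eqn: "real (m + 1) + real j * y = real p + 2 * real j + 1" using mp by (simp add: of_nat_diff)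
    have "(real (m + 1) + real j * y) / (real j + 1) = (real p + 2 * real (Suc (Suc j)) - 3) / (real (Suc (Suc j)) - 1)"
      unfolding eqn by (simp add: algebra_simps)
    then show ?thesis unfolding P2_def PP_def by simp
  qed
  have am: "real (m + 1) * y ^ j \<le> P2" unfolding h3 by (rule amgm) (simp_all add: y0)
  have S: "real m * PP (Suc j) (p - m + 1) + PP (Suc j) (p - m) \<le> P2"
  proof -
    have "real m * PP (Suc j) (p - m + 1) + PP (Suc j) (p - m) \<le> real m * y ^ j + y ^ j"
      using h1 h2 by simp
    also have "\<dots> = real (m + 1) * y ^ j" by (simp add: algebra_simps)
    finally show ?thesis using am by simp
  qed
  define lk where "lk = log 2 (real (Suc (Suc j)))"
  define lk1 where "lk1 = log 2 (real (Suc j))"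
  have lk1: "lk \<ge> 1" unfolding lk_def using j by simp
  have lk10: "lk1 \<ge> 0" unfolding lk1_def by simp
  have lkk: "lk1 \<le> lk" unfolding lk_def lk1_def by (intro log_mono) auto
  have P2ge: "2 * (real p + 1) \<le> P2" unfolding P2_def by (rule P2_ge[OF j])
  have P20: "P2 \<ge> 0" using P2ge by simp
  have c0: "(real (Suc j) * L * lk1) \<ge> 0" using L lk10 by simp
  have "real m * (lk + EL L (Suc j) (p - m + 1)) + (lk + EL L (Suc j) (p - m))
      = real (m + 1) * lk + (real (Suc j) * L * lk1) * (real m * PP (Suc j) (p - m + 1) + PP (Suc j) (p - m))"
    unfolding EL_def lk1_def by (simp add: algebra_simps)
  also have "\<dots> \<le> real (m + 1) * lk + (real (Suc j) * L * lk1) * P2"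
    using S c0 by (intro add_left_mono mult_left_mono) auto
  also have "\<dots> \<le> real (m + 1) * lk + (real (Suc j) * L * lk) * P2"
    using lkk L P20 by (intro add_left_mono mult_right_mono mult_left_mono) auto
  finally have A: "real m * (lk + EL L (Suc j) (p - m + 1)) + (lk + EL L (Suc j) (p - m))
      \<le> real (m + 1) * lk + (real (Suc j) * L * lk) * P2" .
  have lg: "log 2 (real p + 1) \<le> real p + 1"
  proof -
    have "p + 1 \<le> (2::nat) ^ (p + 1)" using less_exp[of "p+1"] by linarith
    then have "real (p + 1) \<le> (2::real) ^ (p + 1)" by (metis of_nat_le_iff of_nat_numeral of_nat_power)
    then have "log 2 (real (p + 1)) \<le> real (p + 1)"
      by (intro log_of_power_le) simp_all
    then show ?thesis by (simp add: add.commute)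
  qed
  have "log 2 (real p + 1) + real (m + 1) * lk \<le> (real p + 1) * lk + (real p + 1) * lk"
  proof -
    have "real p + 1 \<le> (real p + 1) * lk" using lk1 by (simp add: mult_le_cancel_left1)
    moreover have "real (m + 1) * lk \<le> (real p + 1) * lk" using mp lk1 by (intro mult_right_mono) auto
    ultimately show ?thesis using lg by linarith
  qed
  also have "\<dots> = lk * (2 * (real p + 1))" by (simp add: algebra_simps)
  also have "\<dots> \<le> lk * P2" using P2ge lk1 by (intro mult_left_mono) auto
  also have "\<dots> \<le> L * lk * P2" using L lk1 P20 by (simp add: mult_le_cancel_right1 mult_right_mono)
  finally have B: "log 2 (real p + 1) + real (m + 1) * lk \<le> L * lk * P2" .
  have "EL L (Suc (Suc j)) p = (real (Suc j) * L * lk) * P2 + L * lk * P2"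
    unfolding EL_def P2_def lk_def by (simp add: algebra_simps)
  then show ?thesis using A B unfolding lk_def by linarith
qed


lemma g0: "g 0 p = 1" by (rule g.simps(1))

lemma g1: "g (Suc 0) q = q + 1"
proof -
  have "g (Suc 0) q = (\<Sum>m\<le>q. (Suc 0 * g 0 (q - m + 1)) ^ m * (if m = q then 1 else Suc 0 * g 0 (q - m)))"
    by (rule g.simps(2))
  also have "\<dots> = (\<Sum>m\<le>q. (1::nat))" by (intro sum.cong) (simp_all add: g0)
  finally show ?thesis by simp
qed

declare g.simps(2)[simp del]

lemma g_Suc_sum: "real (g (Suc k) p) = (\<Sum>m\<le>p. real ((Suc k * g k (p - m + 1)) ^ m * (if m = p then 1 else Suc k * g k (p - m))))"
  by (simp only: g.simps(2) of_nat_sum)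

lemma g2_vals: "g (Suc (Suc 0)) 0 = 1" "g (Suc (Suc 0)) 1 = 8" "g (Suc (Suc 0)) 2 = 46"
   "g (Suc (Suc 0)) 3 = 264" "g (Suc (Suc 0)) 4 = 1594"
  by code_simp+

lemma pow3: "p \<ge> 4 \<Longrightarrow> 4 * 2 ^ p \<le> (3::nat) ^ p"
proof (induction p rule: dec_induct)
  case base then show ?case by simp
next
  case (step n)
  have "4 * 2 ^ Suc n = 2 * (4 * (2::nat) ^ n)" by simp
  also have "\<dots> \<le> 2 * 3 ^ n" using step.IH by simp
  also have "\<dots> \<le> 3 * 3 ^ n" by simp
  finally show ?case by simp
qed

lemma g2_big:
  assumes p: "p \<ge> 5"
  shows "g (Suc (Suc 0)) p \<le> p ^ (2 * p + 2)"
proof -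
  define C where "C = (2 * (p + 2)) ^ p * (2 * (p + 1))"
  have tb: "(Suc (Suc 0) * g (Suc 0) (p - m + 1)) ^ m * (if m = p then 1 else Suc (Suc 0) * g (Suc 0) (p - m)) \<le> C"
    if m: "m \<le> p" for m
  proof -
    have "Suc (Suc 0) * g (Suc 0) (p - m + 1) = 2 * (p - m + 2)" unfolding g1 numeral_2_eq_2 by simp
    then have "(Suc (Suc 0) * g (Suc 0) (p - m + 1)) ^ m = (2 * (p - m + 2)) ^ m" by (simp only:)
    also have "\<dots> \<le> (2 * (p + 2)) ^ m" by (intro power_mono) auto
    also have "\<dots> \<le> (2 * (p + 2)) ^ p" using m by (intro power_increasing) auto
    finally have a: "(Suc (Suc 0) * g (Suc 0) (p - m + 1)) ^ m \<le> (2 * (p + 2)) ^ p" .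
    have b: "(if m = p then 1 else Suc (Suc 0) * g (Suc 0) (p - m)) \<le> 2 * (p + 1)" by (simp add: g1, arith)
    show ?thesis unfolding C_def using a b by (rule mult_mono) auto
  qed
  have "g (Suc (Suc 0)) p = (\<Sum>m\<le>p. (Suc (Suc 0) * g (Suc 0) (p - m + 1)) ^ m * (if m = p then 1 else Suc (Suc 0) * g (Suc 0) (p - m)))"
    by (simp only: g.simps(2))
  also have "\<dots> \<le> (\<Sum>m\<le>p. C)" using tb by (intro sum_mono) simp
  also have "\<dots> = (p + 1) * C" by simp
  also have "\<dots> = (2 * (p + 1) ^ 2 * 2 ^ p) * (p + 2) ^ p"
  proof -
    have e: "(2 * (p + 2)) ^ p = 2 ^ p * (p + 2) ^ p" by (rule power_mult_distrib)
    show ?thesis unfolding C_def e by (simp only: power2_eq_square mult_ac)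
  qed
  also have "\<dots> \<le> (p ^ 2 * 3 ^ p) * (p + 2) ^ p"
  proof -
    have "(p + 1) ^ 2 \<le> 2 * p ^ 2"
    proof -
      have "5 * p \<le> p * p" using mult_le_mono1[OF p, of p] .
      then have "2 * p + 1 \<le> p * p" using p by linarith
      then show ?thesis by (simp add: power2_eq_square algebra_simps)
    qed
    then have "2 * (p + 1) ^ 2 * 2 ^ p \<le> p ^ 2 * (4 * 2 ^ p)" by simp
    also have "\<dots> \<le> p ^ 2 * 3 ^ p" using pow3[of p] p by simp
    finally show ?thesis by simp
  qed
  also have "\<dots> = p ^ 2 * (3 * (p + 2)) ^ p"
  proof -
    have e: "(3 * (p + 2)) ^ p = 3 ^ p * (p + 2) ^ p" by (rule power_mult_distrib)
    show ?thesis unfolding e by (simp only: mult_ac)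
  qed
  also have "\<dots> \<le> p ^ 2 * (p ^ 2) ^ p"
  proof -
    have "3 * (p + 2) \<le> p ^ 2"
    proof -
      have "3 * (p + 2) \<le> 5 * p" using p by simp
      also have "\<dots> \<le> p * p" using mult_le_mono1[OF p, of p] .
      finally show ?thesis by (simp add: power2_eq_square)
    qed
    then show ?thesis by (intro mult_left_mono power_mono) auto
  qed
  also have "\<dots> = p ^ (2 * p + 2)" by (simp add: power_mult[symmetric] power_add[symmetric] algebra_simps)
  finally show ?thesis .
qed

lemma g2_small: "g (Suc (Suc 0)) 0 \<le> max 2 0 ^ (2 * 0 + 2)" "g (Suc (Suc 0)) 1 \<le> max 2 1 ^ (2 * 1 + 2)"
  "g (Suc (Suc 0)) 2 \<le> max 2 2 ^ (2 * 2 + 2)" "g (Suc (Suc 0)) 3 \<le> max 2 3 ^ (2 * 3 + 2)"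
  "g (Suc (Suc 0)) 4 \<le> max 2 4 ^ (2 * 4 + 2)"
  apply (subst g2_vals(1), simp add: max_def)
  apply (subst g2_vals(2), simp add: max_def)
  apply (subst g2_vals(3), simp add: max_def)
  apply (subst g2_vals(4), simp add: max_def)
  apply (subst g2_vals(5), simp add: max_def)
  done

lemma g2_bound: "g (Suc (Suc 0)) p \<le> (max 2 p) ^ (2 * p + 2)"
proof (cases "p \<le> 4")
  case True
  then have "p = 0 \<or> p = 1 \<or> p = 2 \<or> p = 3 \<or> p = 4" by auto
  then show ?thesis
  proof (elim disjE)
    assume "p = 0" then show ?thesis using g2_small(1) by simp
  next
    assume "p = 1" then show ?thesis using g2_small(2) by simp
  next
    assume "p = 2" then show ?thesis using g2_small(3) by simp
  next
    assume "p = 3" then show ?thesis using g2_small(4) by simp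
  next
    assume "p = 4" then show ?thesis using g2_small(5) by simp
  qed
next
  case False
  then show ?thesis using g2_big[of p] by simp
qed


lemma step:
  fixes k N p :: nat
  assumes k: "k \<ge> 2" and N: "N \<ge> 2" and pN: "p \<le> N"
    and IH: "\<And>q. q \<le> N \<Longrightarrow> real (g k q) \<le> 2 powr EL (log 2 (real N)) k q"
    and core: "\<And>m. m \<le> p \<Longrightarrow> log 2 (real p + 1) + (real m * (log 2 (real (Suc k)) + EL (log 2 (real N)) k (p - m + 1))
           + (log 2 (real (Suc k)) + EL (log 2 (real N)) k (p - m))) \<le> EL (log 2 (real N)) (Suc k) p"
  shows "real (g (Suc k) p) \<le> 2 powr EL (log 2 (real N)) (Suc k) p"
proof -
  define L where "L = log 2 (real N)"
  define lk where "lk = log 2 (real (Suc k))"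
  define E where "E = EL L (Suc k) p"
  have pp: "real p + 1 > 0" by simp
  have L0: "L \<ge> 0" unfolding L_def using N by simp
  have lk0: "lk \<ge> 0" unfolding lk_def by simp
  have Kp: "real (Suc k) = 2 powr lk" unfolding lk_def by simp
  have gb: "real (Suc k * g k q) \<le> 2 powr (lk + EL L k q)" if "q \<le> N" for q
  proof -
    have "real (Suc k * g k q) = real (Suc k) * real (g k q)" by (rule of_nat_mult)
    also have "\<dots> \<le> 2 powr lk * 2 powr (EL L k q)"
      unfolding Kp[symmetric] using IH[OF that] unfolding L_def by (intro mult_left_mono) auto
    also have "\<dots> = 2 powr (lk + EL L k q)" by (simp add: powr_add)
    finally show ?thesis .
  qed
  have tb: "real ((Suc k * g k (p - m + 1)) ^ m * (if m = p then 1 else Suc k * g k (p - m))) \<le> 2 powr E / (real p + 1)"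
    if m: "m \<le> p" for m
  proof -
    define A where "A = lk + EL L k (p - m + 1)"
    define B where "B = lk + EL L k (p - m)"
    have B0: "B \<ge> 0" unfolding B_def using lk0 EL_nonneg[OF k L0] by (simp add: add_nonneg_nonneg)
    have fa: "real ((Suc k * g k (p - m + 1)) ^ m) \<le> 2 powr (real m * A)"
    proof (cases "m = 0")
      case True then show ?thesis by simp
    next
      case False
      then have "p - m + 1 \<le> N" using m pN by simp
      then have "real (Suc k * g k (p - m + 1)) \<le> 2 powr A" unfolding A_def by (rule gb)
      then have "real (Suc k * g k (p - m + 1)) ^ m \<le> (2 powr A) ^ m" by (intro power_mono) simp_all
      also have "\<dots> = 2 powr (real m * A)" by (simp add: powr_power)
      finally show ?thesis by simp
    qed
    have fb: "real (if m = p then 1 else Suc k * g k (p - m)) \<le> 2 powr B"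
    proof (cases "m = p")
      case True then show ?thesis using B0 by (simp add: ge_one_powr_ge_zero)
    next
      case False
      have "p - m \<le> N" using pN by simp
      then have "real (Suc k * g k (p - m)) \<le> 2 powr B" unfolding B_def by (rule gb)
      then show ?thesis using False by simp
    qed
    have "real ((Suc k * g k (p - m + 1)) ^ m * (if m = p then 1 else Suc k * g k (p - m)))
        = real ((Suc k * g k (p - m + 1)) ^ m) * real (if m = p then 1 else Suc k * g k (p - m))"
      by (simp only: of_nat_mult)
    also have "\<dots> \<le> 2 powr (real m * A) * 2 powr B" using fa fb by (intro mult_mono) simp_all
    also have "\<dots> = 2 powr (real m * A + B)" by (simp add: powr_add)
    also have "\<dots> \<le> 2 powr (E - log 2 (real p + 1))"
      using core[OF m] unfolding A_def B_def E_def L_def lk_def by (intro powr_mono) simp_all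
    also have "\<dots> = 2 powr E / (real p + 1)" by (simp add: powr_diff)
    finally show ?thesis .
  qed
  have "real (g (Suc k) p) = (\<Sum>m\<le>p. real ((Suc k * g k (p - m + 1)) ^ m * (if m = p then 1 else Suc k * g k (p - m))))"
    by (rule g_Suc_sum)
  also have "\<dots> \<le> (\<Sum>m\<le>p. 2 powr E / (real p + 1))" using tb by (intro sum_mono) simp
  also have "\<dots> = real (Suc p) * (2 powr E / (real p + 1))" by simp
  also have "\<dots> = 2 powr E"
  proof -
    have gen: "\<And>x y::real. x > 0 \<Longrightarrow> x * (y / x) = y" by simp
    have "real (Suc p) = real p + 1" by simp
    then have "real (Suc p) * (2 powr E / (real p + 1)) = (real p + 1) * (2 powr E / (real p + 1))" by (simp only:)
    also have "\<dots> = 2 powr E" by (rule gen[OF pp])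
    finally show ?thesis .
  qed
  finally show ?thesis unfolding E_def L_def .
qed

lemma inv:
  fixes N :: nat assumes N: "N \<ge> 2"
  shows "p \<le> N \<Longrightarrow> real (g (Suc (Suc j)) p) \<le> 2 powr EL (log 2 (real N)) (Suc (Suc j)) p"
proof (induction j arbitrary: p)
  case 0
  have PP2: "PP (Suc (Suc 0)) p = real p + 1" unfolding PP_def by simp
  have EL2: "EL (log 2 (real N)) (Suc (Suc 0)) p = log 2 (real N) * real (2 * p + 2)"
    unfolding EL_def PP2 by simp
  have Np: "real N > 0" using N by simp
  have "2 powr EL (log 2 (real N)) (Suc (Suc 0)) p = (2 powr log 2 (real N)) powr real (2 * p + 2)"
    unfolding EL2 by (simp add: powr_powr)
  also have "\<dots> = real N ^ (2 * p + 2)"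
  proof -
    have "2 powr log 2 (real N) = real N" using Np by simp
    then show ?thesis using powr_realpow[OF Np, of "2 * p + 2"] by simp
  qed
  finally have R: "2 powr EL (log 2 (real N)) (Suc (Suc 0)) p = real N ^ (2 * p + 2)" .
  have "real (g (Suc (Suc 0)) p) \<le> real ((max 2 p) ^ (2 * p + 2))"
    using g2_bound[of p] by (simp only: of_nat_le_iff)
  also have "\<dots> = real (max 2 p) ^ (2 * p + 2)" by simp
  also have "\<dots> \<le> real N ^ (2 * p + 2)" using N 0 by (intro power_mono) auto
  finally show ?case using R by simp
next
  case (Suc j)
  show ?case
  proof (rule step)
    show "Suc (Suc j) \<ge> 2" by simp
    show "N \<ge> 2" by (rule N)
    show "p \<le> N" by (rule Suc.prems)
    show "real (g (Suc (Suc j)) q) \<le> 2 powr EL (log 2 (real N)) (Suc (Suc j)) q" if "q \<le> N" for q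
      by (rule Suc.IH[OF that])
    have L: "log 2 (real N) \<ge> 1" using N by simp
    show "log 2 (real p + 1) + (real m * (log 2 (real (Suc (Suc (Suc j)))) + EL (log 2 (real N)) (Suc (Suc j)) (p - m + 1))
           + (log 2 (real (Suc (Suc (Suc j)))) + EL (log 2 (real N)) (Suc (Suc j)) (p - m))) \<le> EL (log 2 (real N)) (Suc (Suc (Suc j))) p"
      if "m \<le> p" for m
      using core[of "Suc j" m p "log 2 (real N)"] that L by simp
  qed
qed

theorem theorem2:
  fixes A :: "'a set" and k n :: nat and L :: "'a list set"
  assumes "finite A" and "card A = k" and "k > 1" and "n \<ge> 2"
    and "n_PT A n L"
  shows "finite (canonical_dfa_states A L) \<and>
         real (card (canonical_dfa_states A L)) \<le>
           2 powr (real k * ((real n + 2 * real k - 3) / (real k - 1)) ^ (k - 1)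
                   * log 2 (real n) * log 2 (real k))"
proof -
  have sb: "finite (canonical_dfa_states A L) \<and> card (canonical_dfa_states A L) \<le> g k n"
    by (rule states_bound[OF assms(1,2,5)])
  have kj: "k = Suc (Suc (k - 2))" using assms(3) by simp
  have "real (g (Suc (Suc (k - 2))) n) \<le> 2 powr EL (log 2 (real n)) (Suc (Suc (k - 2))) n"
    by (rule inv[OF assms(4) order_refl])
  then have gk: "real (g k n) \<le> 2 powr EL (log 2 (real n)) k n" using kj by (simp only:)
  have "real (card (canonical_dfa_states A L)) \<le> real (g k n)" using sb by (simp only: of_nat_le_iff)
  then have c: "real (card (canonical_dfa_states A L)) \<le> 2 powr EL (log 2 (real n)) k n"
    using gk by (rule order_trans)
  have e: "EL (log 2 (real n)) k n = real k * ((real n + 2 * real k - 3) / (real k - 1)) ^ (k - 1) * log 2 (real n) * log 2 (real k)"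
    by (simp only: EL_def PP_def)
  show ?thesis using sb c unfolding e by blast
qed


end
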